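(* For every permutation $w\in S_n$, $$|B(w)|+|C(w)|-1 \le |R(w)| \le |B(w)|\cdot|C(w)|.$$
   Context: $S_n$ is generated by the adjacent transpositions $s_1,\dots,s_{n-1}$. A reduced word for $w$ is a word $i_1\cdots i_k$ with $w=s_{i_1}\cdots s_{i_k}$ and $k$ minimal; $R(w)$ is the set of reduced words. A braid move replaces a factor (consecutive letters) $i(i+1)i$ by $(i+1)i(i+1)$ or vice versa; a commutation move replaces a factor $ij$ with $|i-j|>1$ by $ji$. $B(w)$ (resp. $C(w)$) is the set of equivalence classes of $R(w)$ under sequences of braid moves (resp. commutation moves), called braid classes (resp. commutation classes). *)

theory Defs
  imports "HOL-Combinatorics.Combinatorics"
begin

definition simple_transp :: "nat \<Rightarrow> nat \<Rightarrow> nat" where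
  "simple_transp i = transpose i (Suc i)"

definition word_perm :: "nat list \<Rightarrow> (nat \<Rightarrow> nat)" where
  "word_perm ws = foldr (\<lambda>i f. simple_transp i \<circ> f) ws id"

definition gen_word :: "nat \<Rightarrow> nat list \<Rightarrow> bool" where
  "gen_word n ws \<longleftrightarrow> set ws \<subseteq> {1..<n}"

definition perm_length :: "nat \<Rightarrow> (nat \<Rightarrow> nat) \<Rightarrow> nat" where
  "perm_length n w = (LEAST k. \<exists>ws. gen_word n ws \<and> word_perm ws = w \<and> length ws = k)"

definition reduced_words :: "nat \<Rightarrow> (nat \<Rightarrow> nat) \<Rightarrow> nat list set" where
  "reduced_words n w = {ws. gen_word n ws \<and> word_perm ws = w \<and> length ws = perm_length n w}"

definition braid_move :: "nat list \<Rightarrow> nat list \<Rightarrow> bool" where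
  "braid_move u v \<longleftrightarrow> (\<exists>x y i.
      (u = x @ [i, Suc i, i] @ y \<and> v = x @ [Suc i, i, Suc i] @ y) \<or>
      (u = x @ [Suc i, i, Suc i] @ y \<and> v = x @ [i, Suc i, i] @ y))"

definition comm_move :: "nat list \<Rightarrow> nat list \<Rightarrow> bool" where
  "comm_move u v \<longleftrightarrow> (\<exists>x y i j. (Suc i < j \<or> Suc j < i) \<and>
      u = x @ [i, j] @ y \<and> v = x @ [j, i] @ y)"

definition braid_classes :: "nat \<Rightarrow> (nat \<Rightarrow> nat) \<Rightarrow> nat list set set" where
  "braid_classes n w = reduced_words n w // {(u, v). braid_move\<^sup>*\<^sup>* u v}"

definition comm_classes :: "nat \<Rightarrow> (nat \<Rightarrow> nat) \<Rightarrow> nat list set set" where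
  "comm_classes n w = reduced_words n w // {(u, v). comm_move\<^sup>*\<^sup>* u v}"

end

theory Submission imports Defs begin

abbreviation st where "st \<equiv> simple_transp"

lemma st_st: "st i \<circ> st i = id"
  by (simp add: simple_transp_def fun_eq_iff transpose_def)
lemma st_st_app[simp]: "st i (st i x) = x"
  by (simp add: simple_transp_def transpose_def)
lemma bij_st: "bij (st i)"
  by (metis bij_betw_id bij_comp comp_eq_id_dest id_comp o_bij st_st)

lemma word_perm_Nil[simp]: "word_perm [] = id" by (simp add: word_perm_def)
lemma word_perm_Cons[simp]: "word_perm (i#u) = st i \<circ> word_perm u" by (simp add: word_perm_def)
lemma word_perm_append: "word_perm (u@v) = word_perm u \<circ> word_perm v"
  by (induction u) auto
lemma bij_word_perm: "bij (word_perm u)"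
proof (induction u)
  case Nil show ?case by (metis bij_id word_perm_Nil)
next
  case (Cons a u) thus ?case by (metis word_perm_Cons bij_comp bij_st)
qed

lemma st_permutes: "i \<in> {1..<n} \<Longrightarrow> st i permutes {1..n}"
  unfolding simple_transp_def by (rule permutes_swap_id) auto

lemma gen_word_Cons[simp]: "gen_word n (i#u) \<longleftrightarrow> i \<in> {1..<n} \<and> gen_word n u"
  by (auto simp: gen_word_def)
lemma gen_word_Nil[simp]: "gen_word n []" by (simp add: gen_word_def)

lemma word_perm_permutes: "gen_word n u \<Longrightarrow> word_perm u permutes {1..n}"
proof (induction u)
  case Nil show ?case by (metis permutes_id word_perm_Nil)
next
  case (Cons a u) thus ?case by (metis word_perm_Cons gen_word_Cons permutes_compose st_permutes)
qed

lemma st_comm: "Suc i < j \<or> Suc j < i \<Longrightarrow> st i \<circ> st j = st j \<circ> st i"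
  by (auto simp: simple_transp_def transpose_def fun_eq_iff)

lemma st_braid: "st i \<circ> st (Suc i) \<circ> st i = st (Suc i) \<circ> st i \<circ> st (Suc i)"
  by (auto simp: simple_transp_def transpose_def fun_eq_iff)

definition N :: "(nat \<Rightarrow> nat) \<Rightarrow> nat set set" where
  "N f = {{a,b} | a b. a < b \<and> f b < f a}"

definition D :: "(nat \<Rightarrow> nat) \<Rightarrow> nat \<Rightarrow> bool" where
  "D f i \<longleftrightarrow> (\<exists>a b. b < a \<and> f a = i \<and> f b = Suc i)"

lemma st_order:
  assumes "x \<noteq> y" "\<not> ({x,y} = {i, Suc i})"
  shows "st i y < st i x \<longleftrightarrow> y < x"
  using assms by (auto simp: simple_transp_def transpose_def doubleton_eq_iff)

lemma N_finite: assumes "f permutes {1..n}" shows "N f \<subseteq> Pow {1..n}"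
proof
  fix X assume "X \<in> N f"
  then obtain a b where X: "X = {a,b}" "a < b" "f b < f a" by (auto simp: N_def)
  have "a \<in> {1..n}"
  proof (rule ccontr)
    assume "a \<notin> {1..n}"
    hence "f a = a" using permutes_not_in[OF assms] by blast
    moreover have "f b \<in> {1..n} \<longleftrightarrow> b \<in> {1..n}" using permutes_in_image[OF assms] by blast
    moreover have "b \<notin> {1..n} \<Longrightarrow> f b = b" using permutes_not_in[OF assms] by blast
    ultimately show False using X \<open>a \<notin> {1..n}\<close> by (cases "a = 0") auto
  qed
  moreover have "b \<in> {1..n}"
  proof (rule ccontr)
    assume "b \<notin> {1..n}"
    hence "f b = b" using permutes_not_in[OF assms] by blast
    moreover have "f a \<in> {1..n} \<or> f a = a" using permutes_not_in[OF assms] permutes_in_image[OF assms] by blast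
    ultimately show False using X \<open>b \<notin> {1..n}\<close> \<open>a \<in> {1..n}\<close> by auto
  qed
  ultimately show "X \<in> Pow {1..n}" using X by auto
qed

lemma finite_N: "f permutes {1..n} \<Longrightarrow> finite (N f)"
  using N_finite by (meson finite_Pow_iff finite_atLeastAtMost rev_finite_subset)

lemma N_step:
  assumes "bij f"
  shows "N (st i \<circ> f) = (if D f i then N f - {f -` {i, Suc i}} else insert (f -` {i, Suc i}) (N f))"
    and "D f i \<longleftrightarrow> f -` {i, Suc i} \<in> N f"
proof -
  obtain a b where ab: "f a = i" "f b = Suc i" using assms by (metis bij_pointE)
  have T: "f -` {i, Suc i} = {a,b}" using ab assms by (auto simp: bij_def inj_eq) (metis inj_eq)+
  have Dab: "D f i \<longleftrightarrow> b < a" unfolding D_def using ab assms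
    by (auto simp: bij_def) (metis inj_eq n_not_Suc_n)+
  have key: "{c,d} \<in> N g \<longleftrightarrow> (c < d \<and> g d < g c) \<or> (d < c \<and> g c < g d)" for c d g
    unfolding N_def by (auto simp: doubleton_eq_iff)
  show "D f i \<longleftrightarrow> f -` {i, Suc i} \<in> N f"
    unfolding T Dab key ab by auto
  show "N (st i \<circ> f) = (if D f i then N f - {f -` {i, Suc i}} else insert (f -` {i, Suc i}) (N f))"
  proof (rule set_eqI)
    fix X
    show "X \<in> N (st i \<circ> f) \<longleftrightarrow> X \<in> (if D f i then N f - {f -` {i, Suc i}} else insert (f -` {i, Suc i}) (N f))"
    proof (cases "X = {a,b}")
      case True
      have "a \<noteq> b" using ab by auto
      then show ?thesis unfolding True T Dab key using ab
        by (auto simp: simple_transp_def)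
    next
      case False
      have "X \<in> N (st i \<circ> f) \<longleftrightarrow> X \<in> N f"
      proof
        assume "X \<in> N (st i \<circ> f)"
        then obtain c d where cd: "X = {c,d}" "c < d" "st i (f d) < st i (f c)" by (auto simp: N_def)
        have "{f c, f d} \<noteq> {i, Suc i}"
        proof
          assume "{f c, f d} = {i, Suc i}"
          hence "c \<in> f -` {i, Suc i}" "d \<in> f -` {i, Suc i}" by auto
          hence "c \<in> {a,b}" "d \<in> {a,b}" using T by auto
          thus False using False cd by auto
        qed
        moreover have "f c \<noteq> f d" using cd assms by (auto simp: bij_def inj_eq)
        ultimately have "f d < f c" using st_order cd by blast
        then show "X \<in> N f" using cd by (auto simp: N_def)
      next
        assume "X \<in> N f"
        then obtain c d where cd: "X = {c,d}" "c < d" "f d < f c" by (auto simp: N_def)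
        have "{f c, f d} \<noteq> {i, Suc i}"
        proof
          assume "{f c, f d} = {i, Suc i}"
          hence "c \<in> f -` {i, Suc i}" "d \<in> f -` {i, Suc i}" by auto
          hence "c \<in> {a,b}" "d \<in> {a,b}" using T by auto
          thus False using False cd by auto
        qed
        moreover have "f c \<noteq> f d" using cd assms by (auto simp: bij_def inj_eq)
        ultimately have "st i (f d) < st i (f c)" using st_order cd by blast
        then show "X \<in> N (st i \<circ> f)" using cd by (auto simp: N_def)
      qed
      then show ?thesis using False T by auto
    qed
  qed
qed



definition len :: "(nat \<Rightarrow> nat) \<Rightarrow> nat" where "len f = card (N f)"

lemma vimage_st_self: "st i -` {i, Suc i} = {i, Suc i}"
  by (auto simp: simple_transp_def transpose_def split: if_splits)

lemma L_step:
  assumes "f permutes {1..n}" "i \<in> {1..<n}"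
  shows "D f i \<Longrightarrow> len (st i \<circ> f) + 1 = len f"
    and "\<not> D f i \<Longrightarrow> len (st i \<circ> f) = len f + 1"
    and "D (st i \<circ> f) i \<longleftrightarrow> \<not> D f i"
proof -
  have bf: "bij f" using assms(1) permutes_bij by blast
  have fin: "finite (N f)" using finite_N[OF assms(1)] .
  note S = N_step[OF bf, of i]
  show "D f i \<Longrightarrow> len (st i \<circ> f) + 1 = len f"
  proof -
    assume d: "D f i"
    then have m: "f -` {i, Suc i} \<in> N f" using S by simp
    then have "card (N f) > 0" using fin by (auto simp: card_gt_0_iff)
    then show ?thesis using S d m fin unfolding len_def by (simp add: card_Diff_singleton)
  qed
  show "\<not> D f i \<Longrightarrow> len (st i \<circ> f) = len f + 1"
    using S fin unfolding len_def by simp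
  have bf2: "bij (st i \<circ> f)" using bf bij_st bij_comp by blast
  have "(st i \<circ> f) -` {i, Suc i} = f -` {i, Suc i}"
    by (simp add: vimage_comp[symmetric] vimage_st_self)
  then show "D (st i \<circ> f) i \<longleftrightarrow> \<not> D f i"
    using N_step[OF bf2, of i] S by auto
qed

lemma len_word: "gen_word n u \<Longrightarrow> len (word_perm u) \<le> length u"
proof (induction u)
  case Nil
  have "N (\<lambda>x. x) = {}" by (auto simp: N_def)
  then show ?case by (simp add: len_def id_def)
next
  case (Cons a u)
  have p: "word_perm u permutes {1..n}" using Cons.prems word_perm_permutes by auto
  have "a \<in> {1..<n}" using Cons.prems by auto
  then have "len (st a \<circ> word_perm u) \<le> len (word_perm u) + 1"
    using L_step[OF p] by (cases "D (word_perm u) a") force+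
  moreover have "len (word_perm u) \<le> length u" using Cons by simp
  ultimately show ?case unfolding word_perm_Cons length_Cons by linarith
qed

lemma no_descent_id:
  assumes g: "g permutes {1..n}" and inc: "\<And>i. 1 \<le> i \<Longrightarrow> i < n \<Longrightarrow> g i < g (Suc i)"
  shows "g = id"
proof -
  have ge: "k \<le> g k" if "k \<in> {1..n}" for k
    using that
  proof (induction k)
    case 0 then show ?case by simp
  next
    case (Suc k)
    show ?case
    proof (cases "k = 0")
      case True
      then show ?thesis using permutes_in_image[OF g, of "Suc k"] Suc.prems by auto
    next
      case False
      then have "k \<le> g k" using Suc by auto
      moreover have "g k < g (Suc k)" using inc[of k] False Suc.prems by auto
      ultimately show ?thesis by simp
    qed
  qed
  have le: "g (n - d) \<le> n - d" if "d < n" for d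
    using that
  proof (induction d)
    case 0
    then show ?case using permutes_in_image[OF g, of n] by auto
  next
    case (Suc d)
    have "g (n - Suc d) < g (Suc (n - Suc d))" using inc[of "n - Suc d"] Suc.prems by auto
    moreover have "Suc (n - Suc d) = n - d" using Suc.prems by auto
    ultimately show ?case using Suc by auto
  qed
  have "g k = k" for k
  proof (cases "k \<in> {1..n}")
    case True
    then have "k \<le> g k" using ge by auto
    moreover have "g (n - (n - k)) \<le> n - (n - k)" using le[of "n - k"] True by auto
    ultimately show ?thesis using True by auto
  next
    case False then show ?thesis using permutes_not_in[OF g] by auto
  qed
  then show ?thesis by auto
qed

lemma exists_descent:
  assumes f: "f permutes {1..n}" and ne: "f \<noteq> id"
  shows "\<exists>i\<in>{1..<n}. D f i"
proof (rule ccontr)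
  assume nd: "\<not> (\<exists>i\<in>{1..<n}. D f i)"
  let ?g = "inv f"
  have g: "?g permutes {1..n}" using permutes_inv[OF f] .
  have "?g i < ?g (Suc i)" if "1 \<le> i" "i < n" for i
  proof -
    have "\<not> D f i" using nd that by auto
    moreover have "f (?g i) = i" "f (?g (Suc i)) = Suc i" using permutes_inverses[OF f] by auto
    ultimately have "\<not> ?g (Suc i) < ?g i" unfolding D_def by blast
    moreover have "?g i \<noteq> ?g (Suc i)" using permutes_inverses[OF f] by (metis n_not_Suc_n)
    ultimately show ?thesis by simp
  qed
  then have "?g = id" using no_descent_id[OF g] by blast
  then have "f = id" using permutes_inverses[OF f] by (metis id_apply ext)
  then show False using ne by simp
qed

lemma exists_word:
  "f permutes {1..n} \<Longrightarrow> \<exists>u. gen_word n u \<and> word_perm u = f \<and> length u = len f"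
proof (induction "len f" arbitrary: f)
  case 0
  show ?case
  proof (cases "f = id")
    case True
    then show ?thesis by (intro exI[of _ "[]"]) (simp add: 0)
  next
    case False
    then obtain i where i: "i \<in> {1..<n}" "D f i" using exists_descent[OF 0(2)] by blast
    then show ?thesis using L_step(1)[OF 0(2) i] 0(1) by simp
  qed
next
  case (Suc k)
  show ?case
  proof (cases "f = id")
    case True
    then have "N f = {}" by (auto simp: N_def)
    then show ?thesis using Suc(2) by (simp add: len_def)
  next
    case False
    then obtain i where i: "i \<in> {1..<n}" "D f i" using exists_descent[OF Suc(3)] by blast
    have p: "st i \<circ> f permutes {1..n}" using Suc(3) i permutes_compose st_permutes by blast
    have "len (st i \<circ> f) = k" using L_step(1)[OF Suc(3) i] Suc(2) by simp
    then obtain u where u: "gen_word n u" "word_perm u = st i \<circ> f" "length u = k"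
      using Suc(1)[OF _ p] by metis
    have "word_perm (i # u) = f" using u(2) by (simp add: comp_assoc[symmetric] st_st)
    then show ?thesis using u i Suc(2) by (intro exI[of _ "i # u"]) simp
  qed
qed

lemma perm_length_len: "f permutes {1..n} \<Longrightarrow> perm_length n f = len f"
  unfolding perm_length_def
proof (rule Least_equality)
  assume "f permutes {1..n}"
  then show "\<exists>ws. gen_word n ws \<and> word_perm ws = f \<and> length ws = len f" using exists_word by blast
next
  fix y assume "\<exists>ws. gen_word n ws \<and> word_perm ws = f \<and> length ws = y"
  then show "len f \<le> y" using len_word by blast
qed

lemma reduced_words_eq: "w permutes {1..n} \<Longrightarrow>
  reduced_words n w = {u. gen_word n u \<and> word_perm u = w \<and> length u = len w}"
  unfolding reduced_words_def using perm_length_len by simp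


definition mv :: "nat list \<Rightarrow> nat list \<Rightarrow> bool" where
  "mv u v \<longleftrightarrow> braid_move u v \<or> comm_move u v"

lemma braid_move_Cons: "braid_move u v \<Longrightarrow> braid_move (c#u) (c#v)"
  unfolding braid_move_def by (metis append_Cons)
lemma comm_move_Cons: "comm_move u v \<Longrightarrow> comm_move (c#u) (c#v)"
  unfolding comm_move_def by (metis append_Cons)
lemma mv_Cons: "mv u v \<Longrightarrow> mv (c#u) (c#v)"
  unfolding mv_def using braid_move_Cons comm_move_Cons by blast
lemma mvs_Cons: "mv\<^sup>*\<^sup>* u v \<Longrightarrow> mv\<^sup>*\<^sup>* (c#u) (c#v)"
  by (induction rule: rtranclp_induct) (auto intro: rtranclp.rtrancl_into_rtrancl mv_Cons)
lemma braid_move_sym: "braid_move u v \<Longrightarrow> braid_move v u"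
  unfolding braid_move_def by blast
lemma comm_move_sym: "comm_move u v \<Longrightarrow> comm_move v u"
  unfolding comm_move_def by blast
lemma mv_sym: "mv u v \<Longrightarrow> mv v u"
  unfolding mv_def using braid_move_sym comm_move_sym by blast
lemma mvs_sym: "mv\<^sup>*\<^sup>* u v \<Longrightarrow> mv\<^sup>*\<^sup>* v u"
  by (induction rule: rtranclp_induct) (auto intro: converse_rtranclp_into_rtranclp mv_sym)

lemma st_braid_f: "st i \<circ> (st (Suc i) \<circ> (st i \<circ> f)) = st (Suc i) \<circ> (st i \<circ> (st (Suc i) \<circ> f))"
  using st_braid by (metis comp_assoc)
lemma st_comm_f: "Suc i < j \<or> Suc j < i \<Longrightarrow> st i \<circ> (st j \<circ> f) = st j \<circ> (st i \<circ> f)"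
  using st_comm by (metis comp_assoc)

lemma braid_move_inv: "braid_move u v \<Longrightarrow> word_perm v = word_perm u \<and> length v = length u \<and> set v = set u"
  unfolding braid_move_def
  by (auto simp: word_perm_append comp_assoc st_braid_f)
lemma comm_move_inv: "comm_move u v \<Longrightarrow> word_perm v = word_perm u \<and> length v = length u \<and> set v = set u"
  unfolding comm_move_def
  by (auto simp: word_perm_append comp_assoc st_comm_f)
lemma mv_inv: "mv u v \<Longrightarrow> word_perm v = word_perm u \<and> length v = length u \<and> set v = set u"
  unfolding mv_def using braid_move_inv comm_move_inv by blast

lemma first_letter:
  assumes "gen_word n (i#u)" "len (word_perm (i#u)) = Suc (length u)"
  shows "len (word_perm u) = length u" "D (word_perm (i#u)) i"
proof -
  have p: "word_perm u permutes {1..n}" using assms(1) word_perm_permutes by auto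
  have i: "i \<in> {1..<n}" using assms(1) by auto
  have l: "len (word_perm u) \<le> length u" using assms(1) len_word by auto
  have nd: "\<not> D (word_perm u) i"
  proof
    assume "D (word_perm u) i"
    then have "len (st i \<circ> word_perm u) + 1 = len (word_perm u)" using L_step(1)[OF p i] by blast
    then show False using assms(2) l by simp
  qed
  then have "len (st i \<circ> word_perm u) = len (word_perm u) + 1" using L_step(2)[OF p i] by blast
  then show "len (word_perm u) = length u" using assms(2) by simp
  show "D (word_perm (i#u)) i" using nd L_step(3)[OF p i] by simp
qed

lemma descent_comm:
  assumes "Suc i < j \<or> Suc j < i" "D f j"
  shows "D (st i \<circ> f) j"
proof -
  obtain a b where "b < a" "f a = j" "f b = Suc j" using assms(2) unfolding D_def by blast
  then show ?thesis using assms(1) unfolding D_def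
    by (intro exI[of _ a] exI[of _ b]) (auto simp: simple_transp_def transpose_def)
qed

lemma descent_braid1:
  assumes "bij f" "D f i" "D f (Suc i)"
  shows "D (st i \<circ> f) (Suc i)"
proof -
  obtain a1 b1 where 1: "b1 < a1" "f a1 = i" "f b1 = Suc i" using assms(2) unfolding D_def by blast
  obtain a2 b2 where 2: "b2 < a2" "f a2 = Suc i" "f b2 = Suc (Suc i)" using assms(3) unfolding D_def by blast
  have "a2 = b1" using 1 2 assms(1) by (metis bij_pointE)
  then show ?thesis using 1 2 unfolding D_def
    by (intro exI[of _ a1] exI[of _ b2]) (auto simp: simple_transp_def transpose_def)
qed

lemma descent_braid2:
  assumes "bij f" "D f i" "D f (Suc i)"
  shows "D (st (Suc i) \<circ> st i \<circ> f) i"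
proof -
  obtain a1 b1 where 1: "b1 < a1" "f a1 = i" "f b1 = Suc i" using assms(2) unfolding D_def by blast
  obtain a2 b2 where 2: "b2 < a2" "f a2 = Suc i" "f b2 = Suc (Suc i)" using assms(3) unfolding D_def by blast
  have "a2 = b1" using 1 2 assms(1) by (metis bij_pointE)
  then show ?thesis using 1 2 unfolding D_def
    by (intro exI[of _ b1] exI[of _ b2]) (auto simp: simple_transp_def transpose_def)
qed

lemma st_braid5: "st i \<circ> st (Suc i) \<circ> st i \<circ> st (Suc i) \<circ> st i = st (Suc i)"
  by (auto simp: simple_transp_def transpose_def fun_eq_iff)

definition MP :: "nat \<Rightarrow> nat \<Rightarrow> bool" where
  "MP n k \<longleftrightarrow> (\<forall>u v. length u = k \<longrightarrow> gen_word n u \<longrightarrow> gen_word n v \<longrightarrow> word_perm v = word_perm u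
      \<longrightarrow> length v = k \<longrightarrow> len (word_perm u) = k \<longrightarrow> mv\<^sup>*\<^sup>* u v)"

lemma MP_D: "MP n k \<Longrightarrow> length u = k \<Longrightarrow> gen_word n u \<Longrightarrow> gen_word n v \<Longrightarrow> word_perm v = word_perm u
      \<Longrightarrow> length v = k \<Longrightarrow> len (word_perm u) = k \<Longrightarrow> mv\<^sup>*\<^sup>* u v"
  unfolding MP_def by blast

lemma comm_step:
  assumes IH: "MP n k" and lu: "length u = k" and lv: "length v = k"
    and gu: "gen_word n (i#u)" and gv: "gen_word n (j#v)"
    and eq: "word_perm (j#v) = word_perm (i#u)" and l: "len (word_perm (i#u)) = Suc k"
    and c: "Suc i < j \<or> Suc j < i"
  shows "mv\<^sup>*\<^sup>* (i#u) (j#v)"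
proof -
  define W where "W = word_perm (i#u)"
  have Wp: "W permutes {1..n}" unfolding W_def using gu word_perm_permutes by blast
  have i: "i \<in> {1..<n}" and j: "j \<in> {1..<n}" using gu gv by auto
  have lu': "len (word_perm u) = k" and Di: "D W i" using first_letter[OF gu] l lu unfolding W_def by auto
  have lv': "len (word_perm v) = k" and Dj: "D W j" using first_letter[OF gv] l lv eq unfolding W_def by auto
  have U: "word_perm u = st i \<circ> W" unfolding W_def by (simp add: comp_assoc[symmetric] st_st)
  have V: "word_perm v = st j \<circ> W" unfolding W_def using eq[symmetric] by (simp add: comp_assoc[symmetric] st_st)
  have W1p: "st i \<circ> W permutes {1..n}" using Wp i st_permutes permutes_compose by blast
  have DW1: "D (st i \<circ> W) j" using descent_comm[OF c Dj] .
  have l2: "len (st j \<circ> (st i \<circ> W)) + 1 = k" using L_step(1)[OF W1p j DW1] lu' U by simp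
  have W3p: "st j \<circ> (st i \<circ> W) permutes {1..n}" using W1p j st_permutes permutes_compose by blast
  obtain x where x: "gen_word n x" "word_perm x = st j \<circ> (st i \<circ> W)" "length x = len (st j \<circ> (st i \<circ> W))"
    using exists_word[OF W3p] by blast
  have e1: "word_perm (j#x) = word_perm u" using x(2) U by (simp add: comp_assoc[symmetric] st_st)
  have m1: "mv\<^sup>*\<^sup>* u (j#x)"
    using MP_D[OF IH lu _ _ e1 _ lu'] gu j x(1) x(3) l2 by simp
  have cij: "st j \<circ> st i = st i \<circ> st j" using st_comm c by metis
  have e2: "word_perm (i#x) = word_perm v" using x(2) V
    by (simp add: comp_assoc[symmetric] cij) (simp add: comp_assoc st_st)
  have m2: "mv\<^sup>*\<^sup>* (i#x) v"
    using MP_D[OF IH _ _ gv[unfolded gen_word_Cons, THEN conjunct2] e2[symmetric] lv] i x(1) x(3) l2 e2 lv' by simp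
  have "comm_move (i#j#x) (j#i#x)" unfolding comm_move_def using c
    by (intro exI[of _ "[]"] exI[of _ x] exI[of _ i] exI[of _ j]) simp
  then have "mv (i#j#x) (j#i#x)" by (simp add: mv_def)
  then show ?thesis using mvs_Cons[OF m1, of i] mvs_Cons[OF m2, of j]
    by (meson rtranclp.rtrancl_into_rtrancl rtranclp_trans)
qed

lemma braid_step:
  assumes IH: "MP n k" and lu: "length u = k" and lv: "length v = k"
    and gu: "gen_word n (i#u)" and gv: "gen_word n (Suc i#v)"
    and eq: "word_perm (Suc i#v) = word_perm (i#u)" and l: "len (word_perm (i#u)) = Suc k"
  shows "mv\<^sup>*\<^sup>* (i#u) (Suc i#v)"
proof -
  define W where "W = word_perm (i#u)"
  have Wp: "W permutes {1..n}" unfolding W_def using gu word_perm_permutes by blast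
  have bW: "bij W" using Wp permutes_bij by blast
  have i: "i \<in> {1..<n}" and j: "Suc i \<in> {1..<n}" using gu gv by auto
  have lu': "len (word_perm u) = k" and Di: "D W i" using first_letter[OF gu] l lu unfolding W_def by auto
  have lv': "len (word_perm v) = k" and Dj: "D W (Suc i)" using first_letter[OF gv] l lv eq unfolding W_def by auto
  have U: "word_perm u = st i \<circ> W" unfolding W_def by (simp add: comp_assoc[symmetric] st_st)
  have V: "word_perm v = st (Suc i) \<circ> W" unfolding W_def using eq[symmetric] by (simp add: comp_assoc[symmetric] st_st)
  have W1p: "st i \<circ> W permutes {1..n}" using Wp i st_permutes permutes_compose by blast
  have DW1: "D (st i \<circ> W) (Suc i)" using descent_braid1[OF bW Di Dj] .
  have l2: "len (st (Suc i) \<circ> (st i \<circ> W)) + 1 = k" using L_step(1)[OF W1p j DW1] lu' U by simp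
  have W2p: "st (Suc i) \<circ> (st i \<circ> W) permutes {1..n}" using W1p j st_permutes permutes_compose by blast
  have DW2: "D (st (Suc i) \<circ> (st i \<circ> W)) i" using descent_braid2[OF bW Di Dj] by (simp add: comp_assoc)
  have l3: "len (st i \<circ> (st (Suc i) \<circ> (st i \<circ> W))) + 1 = len (st (Suc i) \<circ> (st i \<circ> W))"
    using L_step(1)[OF W2p i DW2] .
  have W3p: "st i \<circ> (st (Suc i) \<circ> (st i \<circ> W)) permutes {1..n}" using W2p i st_permutes permutes_compose by blast
  obtain x where x: "gen_word n x" "word_perm x = st i \<circ> (st (Suc i) \<circ> (st i \<circ> W))"
      "length x = len (st i \<circ> (st (Suc i) \<circ> (st i \<circ> W)))"
    using exists_word[OF W3p] by blast
  have e1: "word_perm (Suc i#i#x) = word_perm u" using x(2) U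
    by (simp add: comp_assoc[symmetric] st_st)
  have m1: "mv\<^sup>*\<^sup>* u (Suc i#i#x)"
    using MP_D[OF IH lu _ _ e1 _ lu'] gu j i x(1) x(3) l2 l3 by simp
  have e2: "word_perm (i#Suc i#x) = word_perm v" using x(2) V st_braid5
    by (simp add: comp_assoc[symmetric])
  have m2: "mv\<^sup>*\<^sup>* (i#Suc i#x) v"
    using MP_D[OF IH _ _ gv[unfolded gen_word_Cons, THEN conjunct2] e2[symmetric] lv] i j x(1) x(3) l2 l3 e2 lv' by simp
  have "braid_move (i#Suc i#i#x) (Suc i#i#Suc i#x)" unfolding braid_move_def
    by (intro exI[of _ "[]"] exI[of _ x] exI[of _ i]) simp
  then have "mv (i#Suc i#i#x) (Suc i#i#Suc i#x)" by (simp add: mv_def)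
  then show ?thesis using mvs_Cons[OF m1, of i] mvs_Cons[OF m2, of "Suc i"]
    by (meson rtranclp.rtrancl_into_rtrancl rtranclp_trans)
qed


lemma st_cancel: "st i \<circ> f = st i \<circ> g \<Longrightarrow> f = g"
  by (metis comp_assoc id_comp st_st)

lemma MP_all: "MP n k"
proof (induction k)
  case 0
  then show ?case unfolding MP_def by simp
next
  case (Suc k)
  show ?case unfolding MP_def
  proof (intro allI impI)
    fix u v :: "nat list"
    assume lu: "length u = Suc k" and gu: "gen_word n u" and gv: "gen_word n v"
      and eq: "word_perm v = word_perm u" and lv: "length v = Suc k" and l: "len (word_perm u) = Suc k"
    obtain i u' where u: "u = i # u'" using lu by (cases u) auto
    obtain j v' where v: "v = j # v'" using lv by (cases v) auto
    have lu': "length u' = k" and lv': "length v' = k" using u v lu lv by auto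
    have l': "len (word_perm (i#u')) = Suc k" using l u by simp
    have eq': "word_perm (j#v') = word_perm (i#u')" using eq u v by simp
    have gu': "gen_word n (i#u')" and gv': "gen_word n (j#v')" using gu gv u v by auto
    consider "i = j" | "Suc i < j \<or> Suc j < i" | "j = Suc i" | "i = Suc j" by linarith
    then show "mv\<^sup>*\<^sup>* u v"
    proof cases
      case 1
      have "word_perm v' = word_perm u'" using eq' 1 by (auto intro: st_cancel)
      moreover have "len (word_perm u') = k" using first_letter(1)[OF gu'] l' lu' by simp
      ultimately have "mv\<^sup>*\<^sup>* u' v'" using MP_D[OF Suc.IH lu'] gu' gv' lv' by simp
      then show ?thesis using u v 1 mvs_Cons by simp
    next
      case 2
      then show ?thesis using comm_step[OF Suc.IH lu' lv' gu' gv' eq' l'] u v by simp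
    next
      case 3
      then show ?thesis using braid_step[OF Suc.IH lu' lv' gu'] gv' eq' l' u v by simp
    next
      case 4
      have l'': "len (word_perm (j#v')) = Suc k" using l' eq' by simp
      have "mv\<^sup>*\<^sup>* v u" using braid_step[OF Suc.IH lv' lu' gv'] gu' eq'[symmetric] l'' u v 4 by simp
      then show ?thesis using mvs_sym by blast
    qed
  qed
qed

lemma matsumoto:
  assumes "w permutes {1..n}" "u \<in> reduced_words n w" "v \<in> reduced_words n w"
  shows "mv\<^sup>*\<^sup>* u v"
  using assms MP_D[OF MP_all, of u "length u" n v] unfolding reduced_words_eq[OF assms(1)] by auto

fun labsW :: "(nat \<Rightarrow> nat) \<Rightarrow> nat list \<Rightarrow> nat set list" where
  "labsW g [] = []"
| "labsW g (i#u) = (word_perm u \<circ> g) -` {i, Suc i} # labsW g u"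

lemma labsW_append: "labsW g (x @ z) = labsW (word_perm z \<circ> g) x @ labsW g z"
  by (induction x) (auto simp: word_perm_append comp_assoc)

fun bef :: "'a list \<Rightarrow> ('a \<times> 'a) set" where
  "bef [] = {}"
| "bef (x#xs) = {x} \<times> set xs \<union> bef xs"

lemma bef_append: "bef (xs @ ys) = bef xs \<union> set xs \<times> set ys \<union> bef ys"
  by (induction xs) auto

definition bint :: "nat set list \<Rightarrow> (nat set \<times> nat set) set" where
  "bint L = {p \<in> bef L. fst p \<inter> snd p \<noteq> {}}"
definition bdis :: "nat set list \<Rightarrow> (nat set \<times> nat set) set" where
  "bdis L = {p \<in> bef L. fst p \<inter> snd p = {}}"

lemma swap2:
  assumes "P \<inter> Q = {}"
  shows "bint (A @ [P,Q] @ C) = bint (A @ [Q,P] @ C)" "set (A @ [P,Q] @ C) = set (A @ [Q,P] @ C)"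
proof -
  define X where "X = bef A \<union> set A \<times> ({P,Q} \<union> set C) \<union> {P,Q} \<times> set C \<union> bef C"
  have 1: "bef (A @ [P,Q] @ C) = X \<union> {(P,Q)}"
    unfolding X_def bef_append by auto
  have 2: "bef (A @ [Q,P] @ C) = X \<union> {(Q,P)}"
    unfolding X_def bef_append by auto
  have 3: "{p \<in> X \<union> S. fst p \<inter> snd p \<noteq> {}} = {p \<in> X. fst p \<inter> snd p \<noteq> {}}"
    if "\<forall>p\<in>S. fst p \<inter> snd p = {}" for S using that by blast
  have a: "\<forall>p\<in>{(P,Q)}. fst p \<inter> snd p = {}" using assms by auto
  have b: "\<forall>p\<in>{(Q,P)}. fst p \<inter> snd p = {}" using assms by (auto simp: Int_commute)
  show "bint (A @ [P,Q] @ C) = bint (A @ [Q,P] @ C)" unfolding bint_def 1 2 3[OF a] 3[OF b] ..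
  show "set (A @ [P,Q] @ C) = set (A @ [Q,P] @ C)" by auto
qed

lemma swap3:
  assumes "P \<inter> Q \<noteq> {}" "P \<inter> R \<noteq> {}" "Q \<inter> R \<noteq> {}"
  shows "bdis (A @ [P,Q,R] @ C) = bdis (A @ [R,Q,P] @ C)"
proof -
  define X where "X = bef A \<union> set A \<times> ({P,Q,R} \<union> set C) \<union> {P,Q,R} \<times> set C \<union> bef C"
  have 1: "bef (A @ [P,Q,R] @ C) = X \<union> {(P,Q),(P,R),(Q,R)}"
    unfolding X_def bef_append by auto
  have 2: "bef (A @ [R,Q,P] @ C) = X \<union> {(R,Q),(R,P),(Q,P)}"
    unfolding X_def bef_append by auto
  have 3: "{p \<in> X \<union> S. fst p \<inter> snd p = {}} = {p \<in> X. fst p \<inter> snd p = {}}"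
    if "\<forall>p\<in>S. fst p \<inter> snd p \<noteq> {}" for S using that by blast
  have a: "\<forall>p\<in>{(P,Q),(P,R),(Q,R)}. fst p \<inter> snd p \<noteq> {}" using assms by auto
  have b: "\<forall>p\<in>{(R,Q),(R,P),(Q,P)}. fst p \<inter> snd p \<noteq> {}" using assms by (auto simp: Int_commute)
  show ?thesis unfolding bdis_def 1 2 3[OF a] 3[OF b] ..
qed

lemma vimage_st2: "st i -` {a, b} = {st i a, st i b}"
  by (auto simp: simple_transp_def transpose_def split: if_splits)
lemma st_1[simp]: "st i i = Suc i" by (simp add: simple_transp_def)
lemma st_2[simp]: "st i (Suc i) = i" by (simp add: simple_transp_def)
lemma st_3[simp]: "x \<noteq> i \<Longrightarrow> x \<noteq> Suc i \<Longrightarrow> st i x = x" by (simp add: simple_transp_def)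

lemma comp_lam_id[simp]: "f \<circ> (\<lambda>x. x) = f" by (simp add: fun_eq_iff)

abbreviation L :: "nat list \<Rightarrow> nat set list" where "L \<equiv> labsW id"

lemma comm_labels:
  assumes "comm_move u v"
  shows "bint (L u) = bint (L v) \<and> set (L u) = set (L v)"
proof -
  obtain x y i j where c: "Suc i < j \<or> Suc j < i" and u: "u = x @ [i,j] @ y" and v: "v = x @ [j,i] @ y"
    using assms unfolding comm_move_def by blast
  define Y where "Y = word_perm y"
  have we: "word_perm ([i,j] @ y) = word_perm ([j,i] @ y)" using st_comm_f[OF c] by simp
  have ne: "i \<noteq> j" "i \<noteq> Suc j" "Suc i \<noteq> j" "j \<noteq> Suc i" "Suc j \<noteq> i" using c by auto
  have Lu: "L u = labsW (word_perm ([i,j] @ y)) x @ [Y -` {i, Suc i}, Y -` {j, Suc j}] @ L y"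
    unfolding u labsW_append using ne
    by (simp add: Y_def vimage_comp[symmetric] vimage_st2)
  have Lv: "L v = labsW (word_perm ([i,j] @ y)) x @ [Y -` {j, Suc j}, Y -` {i, Suc i}] @ L y"
    unfolding v labsW_append we using ne
    by (simp add: Y_def vimage_comp[symmetric] vimage_st2)
  have "Y -` {i, Suc i} \<inter> Y -` {j, Suc j} = {}" using c by auto
  then show ?thesis unfolding Lu Lv using swap2[of "Y -` {i, Suc i}" "Y -` {j, Suc j}"] by blast
qed

lemma braid_labels:
  assumes "braid_move u v"
  shows "bdis (L u) = bdis (L v)"
proof -
  have main: "bdis (L (x @ [i, Suc i, i] @ y)) = bdis (L (x @ [Suc i, i, Suc i] @ y))" for x y i
  proof -
    define Y where "Y = word_perm y"
    have sY: "surj Y" unfolding Y_def using bij_word_perm bij_is_surj by blast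
    have we: "word_perm ([i, Suc i, i] @ y) = word_perm ([Suc i, i, Suc i] @ y)" using st_braid_f by simp
    have Lu: "L (x @ [i, Suc i, i] @ y) = labsW (word_perm ([i, Suc i, i] @ y)) x @
        [Y -` {Suc i, Suc (Suc i)}, Y -` {i, Suc (Suc i)}, Y -` {i, Suc i}] @ L y"
      unfolding labsW_append
      by (simp add: Y_def vimage_comp[symmetric] vimage_st2 insert_commute)
    have Lv: "L (x @ [Suc i, i, Suc i] @ y) = labsW (word_perm ([i, Suc i, i] @ y)) x @
        [Y -` {i, Suc i}, Y -` {i, Suc (Suc i)}, Y -` {Suc i, Suc (Suc i)}] @ L y"
      unfolding labsW_append we
      by (simp add: Y_def vimage_comp[symmetric] vimage_st2 insert_commute)
    have ne: "Y -` {c} \<noteq> {}" for c using sY by (metis empty_iff surj_def vimage_singleton_eq)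
    have "Y -` {Suc i, Suc (Suc i)} \<inter> Y -` {i, Suc (Suc i)} \<noteq> {}"
      using ne[of "Suc (Suc i)"] by blast
    moreover have "Y -` {Suc i, Suc (Suc i)} \<inter> Y -` {i, Suc i} \<noteq> {}"
      using ne[of "Suc i"] by blast
    moreover have "Y -` {i, Suc (Suc i)} \<inter> Y -` {i, Suc i} \<noteq> {}"
      using ne[of "i"] by blast
    ultimately show ?thesis unfolding Lu Lv by (rule swap3)
  qed
  obtain x y i where "(u = x @ [i, Suc i, i] @ y \<and> v = x @ [Suc i, i, Suc i] @ y) \<or>
      (u = x @ [Suc i, i, Suc i] @ y \<and> v = x @ [i, Suc i, i] @ y)"
    using assms unfolding braid_move_def by blast
  then show ?thesis
  proof
    assume "u = x @ [i, Suc i, i] @ y \<and> v = x @ [Suc i, i, Suc i] @ y"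
    then show ?thesis using main[of x i y] by simp
  next
    assume "u = x @ [Suc i, i, Suc i] @ y \<and> v = x @ [i, Suc i, i] @ y"
    then show ?thesis using main[of x i y] by simp
  qed
qed

lemma comms_labels: "comm_move\<^sup>*\<^sup>* u v \<Longrightarrow> bint (L u) = bint (L v) \<and> set (L u) = set (L v)"
proof (induction rule: rtranclp_induct)
  case base then show ?case by blast
next
  case (step y z)
  have "bint (L y) = bint (L z) \<and> set (L y) = set (L z)" by (rule comm_labels[OF step(2)])
  then show ?case using step.IH by (simp only:)
qed

lemma braids_labels: "braid_move\<^sup>*\<^sup>* u v \<Longrightarrow> bdis (L u) = bdis (L v)"
proof (induction rule: rtranclp_induct)
  case base then show ?case by blast
next
  case (step y z)
  have "bdis (L y) = bdis (L z)" by (rule braid_labels[OF step(2)])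
  then show ?case using step.IH by (simp only:)
qed

lemma reduced_labels:
  "gen_word n u \<Longrightarrow> len (word_perm u) = length u \<Longrightarrow> distinct (L u) \<and> set (L u) = N (word_perm u)"
proof (induction u)
  case Nil
  have "N (\<lambda>x. x) = {}" by (auto simp: N_def)
  then show ?case by (simp add: id_def)
next
  case (Cons i u)
  have l0: "len (word_perm (i#u)) = Suc (length u)" using Cons.prems(2) by (simp only: length_Cons)
  have lu: "len (word_perm u) = length u" and D: "D (word_perm (i#u)) i"
    using first_letter[OF Cons.prems(1) l0] by auto
  have p: "word_perm u permutes {1..n}" using Cons.prems(1) word_perm_permutes by auto
  have i: "i \<in> {1..<n}" using Cons.prems(1) by auto
  have nD: "\<not> D (word_perm u) i" using D L_step(3)[OF p i] by simp
  have bU: "bij (word_perm u)" using bij_word_perm .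
  have T: "word_perm u -` {i, Suc i} \<notin> N (word_perm u)" using N_step(2)[OF bU, of i] nD by simp
  have NN: "N (word_perm (i#u)) = insert (word_perm u -` {i, Suc i}) (N (word_perm u))"
    using N_step(1)[OF bU, of i] nD by simp
  have gu: "gen_word n u" using Cons.prems(1) by simp
  have IH: "distinct (L u) \<and> set (L u) = N (word_perm u)" by (rule Cons.IH[OF gu lu])
  have e: "L (i#u) = word_perm u -` {i, Suc i} # L u" by simp
  show ?case unfolding e distinct.simps list.set(2) using IH T NN by metis
qed

lemma bef_eq_list:
  "distinct L1 \<Longrightarrow> distinct L2 \<Longrightarrow> set L1 = set L2 \<Longrightarrow> bef L1 = bef L2 \<Longrightarrow> L1 = L2"
proof (induction L1 arbitrary: L2)
  case Nil then show ?case by simp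
next
  case (Cons a L1)
  obtain b L2' where L2: "L2 = b # L2'" using Cons.prems(3) by (cases L2) auto
  have "a = b"
  proof (rule ccontr)
    assume ab: "a \<noteq> b"
    then have "b \<in> set L1" using Cons.prems(3) L2 by auto
    then have "(a, b) \<in> bef (a # L1)" by simp
    then have "(a, b) \<in> bef L2" unfolding Cons.prems(4) .
    then have "(a, b) \<in> bef L2'" using L2 ab by auto
    moreover have "bef L2' \<subseteq> set L2' \<times> set L2'" by (induction L2') auto
    ultimately show False using Cons.prems(2) L2 by auto
  qed
  have s: "set L1 = set L2'" using Cons.prems L2 \<open>a = b\<close> by auto
  have bsub: "bef xs \<subseteq> set xs \<times> set xs" for xs :: "'a list" by (induction xs) auto
  have "bef L1 = bef L2'"
  proof -
    have "bef L1 = {p \<in> bef (a#L1). fst p \<noteq> a}" using Cons.prems(1) bsub[of L1] by auto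
    moreover have "bef L2' = {p \<in> bef L2. fst p \<noteq> a}" using Cons.prems(2) L2 bsub[of L2'] \<open>a = b\<close> by auto
    ultimately show ?thesis by (simp only: Cons.prems(4))
  qed
  then show ?case using Cons L2 s \<open>a = b\<close> by simp
qed

lemma labsW_inj: "bij g \<Longrightarrow> labsW g u = labsW g v \<Longrightarrow> u = v"
proof (induction u arbitrary: g v rule: rev_induct)
  case Nil
  then show ?case by (cases v) auto
next
  case (snoc i u)
  have "length (labsW g v) = length (labsW g (u @ [i]))" using snoc.prems by simp
  moreover have len: "length (labsW h w) = length w" for h w by (induction w) auto
  ultimately obtain v1 j where v: "v = v1 @ [j]" by (cases v rule: rev_exhaust) auto
  have eq: "labsW (st i \<circ> g) u @ [g -` {i, Suc i}] = labsW (st j \<circ> g) v1 @ [g -` {j, Suc j}]"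
    using snoc.prems(2) unfolding v labsW_append by simp
  then have e1: "g -` {i, Suc i} = g -` {j, Suc j}" by simp
  have "{i, Suc i} = {j, Suc j}"
  proof -
    have sg: "surj g" using snoc.prems(1) bij_is_surj by blast
    have "g ` (g -` {i, Suc i}) = g ` (g -` {j, Suc j})" using e1 by simp
    then show ?thesis using surj_image_vimage_eq[OF sg] by simp
  qed
  then have ij: "i = j" by (auto simp: doubleton_eq_iff)
  have "bij (st i \<circ> g)" using snoc.prems(1) bij_st bij_comp by blast
  then have "u = v1" using snoc.IH eq ij by simp
  then show ?case using v ij by simp
qed

lemma braid_comm_unique:
  assumes w: "w permutes {1..n}" and u: "u \<in> reduced_words n w" and v: "v \<in> reduced_words n w"
    and b: "braid_move\<^sup>*\<^sup>* u v" and c: "comm_move\<^sup>*\<^sup>* u v"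
  shows "u = v"
proof -
  have ru: "gen_word n u" "len (word_perm u) = length u" and rv: "gen_word n v" "len (word_perm v) = length v"
    using u v unfolding reduced_words_eq[OF w] by auto
  have du: "distinct (L u)" and dv: "distinct (L v)" using reduced_labels ru rv by blast+
  have "bef (L u) = bint (L u) \<union> bdis (L u)" "bef (L v) = bint (L v) \<union> bdis (L v)"
    unfolding bint_def bdis_def by auto
  then have "bef (L u) = bef (L v)" using comms_labels[OF c] braids_labels[OF b] by simp
  moreover have "set (L u) = set (L v)" using comms_labels[OF c] by blast
  ultimately have "L u = L v" using bef_eq_list[OF du dv] by blast
  then show ?thesis using labsW_inj[OF bij_id] by blast
qed


lemma rtranclp_sym_gen:
  assumes sy: "\<And>a b. P a b \<Longrightarrow> P b a" and "P\<^sup>*\<^sup>* u v" shows "P\<^sup>*\<^sup>* v u"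
  using assms(2)
proof (induction rule: rtranclp_induct)
  case base then show ?case by simp
next
  case (step y z) then show ?case using sy by (meson converse_rtranclp_into_rtranclp)
qed

lemma cls_eq_iff:
  assumes "\<And>a b. P a b \<Longrightarrow> P b a"
  shows "{(u, v). P\<^sup>*\<^sup>* u v} `` {x} = {(u, v). P\<^sup>*\<^sup>* u v} `` {y} \<longleftrightarrow> P\<^sup>*\<^sup>* x y"
proof
  assume "{(u, v). P\<^sup>*\<^sup>* u v} `` {x} = {(u, v). P\<^sup>*\<^sup>* u v} `` {y}"
  moreover have "y \<in> {(u, v). P\<^sup>*\<^sup>* u v} `` {y}" by simp
  ultimately have "y \<in> {(u, v). P\<^sup>*\<^sup>* u v} `` {x}" by simp
  then show "P\<^sup>*\<^sup>* x y" by simp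
next
  assume xy: "P\<^sup>*\<^sup>* x y"
  have yx: "P\<^sup>*\<^sup>* y x" using rtranclp_sym_gen[OF assms xy] by blast
  show "{(u, v). P\<^sup>*\<^sup>* u v} `` {x} = {(u, v). P\<^sup>*\<^sup>* u v} `` {y}"
    using xy yx by (auto intro: rtranclp_trans)
qed

lemma quotient_image: "A // r = (\<lambda>x. r `` {x}) ` A"
  by (auto simp: quotient_def)

lemma conn_count:
  fixes R :: "'a set" and \<beta> :: "'a \<Rightarrow> 'b" and \<gamma> :: "'a \<Rightarrow> 'c"
  assumes fin: "finite R" and conn: "\<And>x y. x \<in> R \<Longrightarrow> y \<in> R \<Longrightarrow> E\<^sup>*\<^sup>* x y"
    and E: "\<And>u v. E u v \<Longrightarrow> u \<in> R \<and> v \<in> R \<and> (\<beta> u = \<beta> v \<or> \<gamma> u = \<gamma> v)"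
  shows "card (\<beta> ` R) + card (\<gamma> ` R) \<le> card R + 1"
proof (cases "R = {}")
  case True then show ?thesis by simp
next
  case False
  have claim: "1 \<le> k \<Longrightarrow> k \<le> card R \<Longrightarrow> \<exists>S\<subseteq>R. card S = k \<and> card (\<beta> ` S) + card (\<gamma> ` S) \<le> k + 1" for k
  proof (induction k)
    case 0 then show ?case by simp
  next
    case (Suc k)
    show ?case
    proof (cases "k = 0")
      case True
      obtain x where "x \<in> R" using False by blast
      then show ?thesis using True by (intro exI[of _ "{x}"]) auto
    next
      case False
      then obtain S where S: "S \<subseteq> R" "card S = k" "card (\<beta> ` S) + card (\<gamma> ` S) \<le> k + 1"
        using Suc by auto
      have finS: "finite S" using S(1) fin finite_subset by blast
      have "S \<noteq> {}" using S(2) False by auto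
      then obtain x where x: "x \<in> S" by blast
      have "S \<noteq> R" using S(2) Suc.prems(2) by auto
      then obtain y where y: "y \<in> R" "y \<notin> S" using S(1) by blast
      have "\<exists>u\<in>R - S. \<exists>v\<in>S. \<beta> u = \<beta> v \<or> \<gamma> u = \<gamma> v"
      proof (rule ccontr)
        assume nc: "\<not> ?thesis"
        have "E\<^sup>*\<^sup>* x z \<Longrightarrow> z \<in> S" for z
        proof (induction rule: rtranclp_induct)
          case base then show ?case using x by simp
        next
          case (step z1 z2)
          then have "z2 \<in> R" "\<beta> z1 = \<beta> z2 \<or> \<gamma> z1 = \<gamma> z2" using E by auto
          then show ?case using nc step.IH by fastforce
        qed
        then show False using conn[of x y] x y S(1) by blast
      qed
      then obtain u v where uv: "u \<in> R" "u \<notin> S" "v \<in> S" "\<beta> u = \<beta> v \<or> \<gamma> u = \<gamma> v" by blast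
      let ?S = "insert u S"
      have c1: "card ?S = Suc k" using finS uv S(2) by simp
      have b1: "card (\<beta> ` ?S) \<le> card (\<beta> ` S) + (if \<beta> u \<in> \<beta> ` S then 0 else 1)"
        using finS by (simp add: card_insert_if)
      have g1: "card (\<gamma> ` ?S) \<le> card (\<gamma> ` S) + (if \<gamma> u \<in> \<gamma> ` S then 0 else 1)"
        using finS by (simp add: card_insert_if)
      have "\<beta> u \<in> \<beta> ` S \<or> \<gamma> u \<in> \<gamma> ` S" using uv by auto
      then have "card (\<beta> ` ?S) + card (\<gamma> ` ?S) \<le> Suc k + 1" using b1 g1 S(3) by (auto split: if_splits)
      then show ?thesis using c1 uv S(1) by (intro exI[of _ ?S]) auto
    qed
  qed
  have "1 \<le> card R" using False fin by (simp add: Suc_le_eq card_gt_0_iff)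
  then obtain S where S: "S \<subseteq> R" "card S = card R" "card (\<beta> ` S) + card (\<gamma> ` S) \<le> card R + 1"
    using claim by blast
  have "S = R" using card_subset_eq[OF fin S(1) S(2)] .
  then show ?thesis using S(3) by simp
qed

theorem theorem4p6:
  fixes n :: nat and w :: "nat \<Rightarrow> nat"
  assumes "w permutes {1..n}"
  shows "card (braid_classes n w) + card (comm_classes n w) - 1 \<le> card (reduced_words n w)
       \<and> card (reduced_words n w) \<le> card (braid_classes n w) * card (comm_classes n w)"
proof -
  let ?R = "reduced_words n w"
  let ?rb = "{(u, v). braid_move\<^sup>*\<^sup>* u v}"
  let ?rc = "{(u, v). comm_move\<^sup>*\<^sup>* u v}"
  define \<beta> where "\<beta> u = ?rb `` {u}" for u
  define \<gamma> where "\<gamma> u = ?rc `` {u}" for u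
  have B: "braid_classes n w = \<beta> ` ?R" unfolding braid_classes_def quotient_image \<beta>_def ..
  have C: "comm_classes n w = \<gamma> ` ?R" unfolding comm_classes_def quotient_image \<gamma>_def ..
  have Req: "?R = {u. gen_word n u \<and> word_perm u = w \<and> length u = len w}"
    using reduced_words_eq[OF assms] .
  have fin: "finite ?R"
  proof (rule finite_subset)
    show "?R \<subseteq> {xs. set xs \<subseteq> {1..<n} \<and> length xs = len w}" unfolding Req gen_word_def by auto
    show "finite {xs. set xs \<subseteq> {1..<n} \<and> length xs = len w}" by (rule finite_lists_length_eq) simp
  qed
  have bq: "\<beta> u = \<beta> v \<longleftrightarrow> braid_move\<^sup>*\<^sup>* u v" for u v
    unfolding \<beta>_def by (rule cls_eq_iff) (rule braid_move_sym)
  have cq: "\<gamma> u = \<gamma> v \<longleftrightarrow> comm_move\<^sup>*\<^sup>* u v" for u v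
    unfolding \<gamma>_def by (rule cls_eq_iff) (rule comm_move_sym)
  have inj: "inj_on (\<lambda>u. (\<beta> u, \<gamma> u)) ?R"
  proof (rule inj_onI)
    fix u v assume "u \<in> ?R" "v \<in> ?R" "(\<beta> u, \<gamma> u) = (\<beta> v, \<gamma> v)"
    then show "u = v" using braid_comm_unique[OF assms] bq cq by blast
  qed
  have "card ?R = card ((\<lambda>u. (\<beta> u, \<gamma> u)) ` ?R)" using card_image[OF inj] by simp
  also have "\<dots> \<le> card (\<beta> ` ?R \<times> \<gamma> ` ?R)"
    by (rule card_mono) (use fin in auto)
  also have "\<dots> = card (\<beta> ` ?R) * card (\<gamma> ` ?R)" by (rule card_cartesian_product)
  finally have up: "card ?R \<le> card (\<beta> ` ?R) * card (\<gamma> ` ?R)" .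
  define E where "E u v \<longleftrightarrow> u \<in> ?R \<and> v \<in> ?R \<and> mv u v" for u v
  have mvR: "mv u v \<Longrightarrow> u \<in> ?R \<Longrightarrow> v \<in> ?R" for u v
    using mv_inv[of u v] unfolding Req gen_word_def by auto
  have lift: "mv\<^sup>*\<^sup>* u v \<Longrightarrow> u \<in> ?R \<Longrightarrow> v \<in> ?R \<and> E\<^sup>*\<^sup>* u v" for u v
  proof (induction rule: rtranclp_induct)
    case base then show ?case by simp
  next
    case (step y z)
    then have "y \<in> ?R" "E\<^sup>*\<^sup>* u y" by auto
    moreover have "z \<in> ?R" using mvR step(2) \<open>y \<in> ?R\<close> by blast
    moreover have "E y z" unfolding E_def using step(2) \<open>y \<in> ?R\<close> \<open>z \<in> ?R\<close> by blast
    ultimately show ?case by (meson rtranclp.rtrancl_into_rtrancl)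
  qed
  have conn: "E\<^sup>*\<^sup>* x y" if "x \<in> ?R" "y \<in> ?R" for x y
    using lift[OF matsumoto[OF assms that]] that by blast
  have Ep: "u \<in> ?R \<and> v \<in> ?R \<and> (\<beta> u = \<beta> v \<or> \<gamma> u = \<gamma> v)" if "E u v" for u v
    using that unfolding E_def mv_def bq cq by auto
  have low: "card (\<beta> ` ?R) + card (\<gamma> ` ?R) \<le> card ?R + 1"
    by (rule conn_count[OF fin, of E]) (use conn Ep in auto)
  show ?thesis unfolding B C using up low by simp
qed

end
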